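(* For $H\in[0,1]$ let $\rho_1(H)=2^{2H-1}-1$, $\rho_2(H)=\frac12\left(3^{2H}-2^{2H+1}+1\right)$ and $$\det\Sigma_3(H)=\det\begin{pmatrix}1&\rho_1(H)&\rho_2(H)\\ \rho_1(H)&1&\rho_1(H)\\ \rho_2(H)&\rho_1(H)&1\end{pmatrix}=1+2\rho_1(H)^2\rho_2(H)-\rho_2(H)^2-2\rho_1(H)^2 .$$ Then $\det\Sigma_3(H)$ increases from $\frac12$ to $1$ as $H$ increases from $0$ to $\frac12$, and decreases from $1$ to $0$ as $H$ increases from $\frac12$ to $1$. Consequently, $\log(\det\Sigma_3(H))$ increases from $-\log 2$ to $0$ as $H$ increases from $0$ to $\frac12$, and decreases from $0$ to $-\infty$ as $H$ increases from $\frac12$ to $1$.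
   Context: $\Sigma_3(H)$ is the covariance matrix of $(G^H_1,G^H_2,G^H_3)$, where $G^H_k=B^H_k-B^H_{k-1}$ is fractional Gaussian noise built from a fractional Brownian motion with Hurst index $H$; the autocovariances are $\rho_k(H)=\frac12((k+1)^{2H}-2k^{2H}+(k-1)^{2H})$, and the explicit formulas for $\rho_1,\rho_2$ above are used also at $H=0,1$. Logarithms are natural, with $\log 0=-\infty$. *)

theory Defs
  imports "HOL-Analysis.Analysis"
begin

definition rho1 :: "real \<Rightarrow> real" where
  "rho1 H = 2 powr (2*H - 1) - 1"

definition rho2 :: "real \<Rightarrow> real" where
  "rho2 H = (3 powr (2*H) - 2 powr (2*H + 1) + 1) / 2"

definition Sigma3 :: "real \<Rightarrow> real^3^3" where
  "Sigma3 H = (\<chi> i j. if i = j then 1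
                        else if (i = 1 \<and> j = 3) \<or> (i = 3 \<and> j = 1) then rho2 H
                        else rho1 H)"

definition detSigma3 :: "real \<Rightarrow> real" where
  "detSigma3 H = 1 + 2 * (rho1 H)^2 * rho2 H - (rho2 H)^2 - 2 * (rho1 H)^2"

definition logext :: "real \<Rightarrow> ereal" where
  "logext x = (if x \<le> 0 then -\<infinity> else ereal (ln x))"

end

theory Submission imports Defs begin

lemma exp_strict: fixes x :: real assumes "x \<noteq> 0" shows "1 + x < exp x"
proof (cases "1 + x/2 \<ge> 0")
  case True
  have "exp x = exp (x/2)^2" by (simp add: power2_eq_square flip: exp_add)
  moreover have "(1 + x/2)^2 \<le> exp (x/2)^2"
    using True exp_ge_add_one_self[of "x/2"] by (intro power_mono) auto
  moreover have "x * x > 0" using assms by (auto simp add: zero_less_mult_iff)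
  then have "1 + x < (1 + x/2)^2" by (simp add: power2_eq_square field_simps)
  ultimately show ?thesis by linarith
next
  case False
  then have "1 + x < 0" by linarith
  then show ?thesis using exp_gt_zero[of x] by linarith
qed

lemma tangent: fixes c s t :: real assumes "c > 0" "c \<noteq> 1" "s \<noteq> t"
  shows "c powr t * (1 + ln c * (s - t)) < c powr s"
proof -
  have "ln c \<noteq> 0" using assms by simp
  then have "1 + ln c * (s - t) < exp (ln c * (s - t))" using assms by (intro exp_strict) auto
  then have "c powr t * (1 + ln c * (s - t)) < c powr t * exp (ln c * (s - t))"
    using assms by simp
  also have "\<dots> = c powr s" using assms by (simp add: powr_def algebra_simps flip: exp_add)
  finally show ?thesis .
qed

lemma convex2:
  fixes al be c d K t :: real
  assumes "al > 0" "be > 0" "c > 0" "d > 0" "c \<noteq> 1" "d \<noteq> 1"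
    and w1: "al * c powr 1 + be * d powr 1 = K" and w2: "al * c powr 2 + be * d powr 2 = K"
  shows "t < 1 \<Longrightarrow> al * c powr t + be * d powr t > K"
    and "1 < t \<Longrightarrow> t < 2 \<Longrightarrow> al * c powr t + be * d powr t < K"
proof -
  define w where "w = (\<lambda>t. al * c powr t + be * d powr t)"
  define w' where "w' = (\<lambda>t. al * ln c * c powr t + be * ln d * d powr t)"
  have tan: "w t + w' t * (s - t) < w s" if "s \<noteq> t" for s t
  proof -
    have "al * (c powr t * (1 + ln c * (s - t))) < al * c powr s"
      using tangent[of c s t] assms that by simp
    moreover have "be * (d powr t * (1 + ln d * (s - t))) < be * d powr s"
      using tangent[of d s t] assms that by simp
    ultimately show ?thesis unfolding w_def w'_def by (simp add: algebra_simps)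
  qed
  {
    assume "t < 1"
    have "w 1 + w' 1 * (2 - 1) < w 2" using tan[of 2 1] by simp
    then have "w' 1 < 0" using w1 w2 unfolding w_def by simp
    moreover have "w 1 + w' 1 * (t - 1) < w t" using tan[of t 1] \<open>t < 1\<close> by simp
    moreover have "w' 1 * (t - 1) > 0" using \<open>w' 1 < 0\<close> \<open>t < 1\<close> by (simp add: mult_neg_neg)
    ultimately show "al * c powr t + be * d powr t > K" using w1 unfolding w_def by simp
  }
  {
    assume "1 < t" "t < 2"
    have a: "w t + w' t * (1 - t) < w 1" using tan[of 1 t] \<open>1 < t\<close> by simp
    have b: "w t + w' t * (2 - t) < w 2" using tan[of 2 t] \<open>t < 2\<close> by simp
    have "(2 - t) * (w t + w' t * (1 - t)) < (2 - t) * w 1"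
      using a \<open>t < 2\<close> by (intro mult_strict_left_mono) auto
    moreover have "(t - 1) * (w t + w' t * (2 - t)) < (t - 1) * w 2"
      using b \<open>1 < t\<close> by (intro mult_strict_left_mono) auto
    ultimately have "w t < (2 - t) * w 1 + (t - 1) * w 2" by (simp add: algebra_simps)
    moreover have "w 1 = K" "w 2 = K" using w1 w2 unfolding w_def by simp_all
    ultimately have "w t < K" by (simp add: algebra_simps)
    then show "al * c powr t + be * d powr t < K" unfolding w_def by simp
  }
qed

lemma P_sign: fixes t :: real
  shows "t < 1 \<Longrightarrow> 3 - 3 * 2 powr t + 3 powr t > 0"
    and "1 < t \<Longrightarrow> t < 2 \<Longrightarrow> 3 - 3 * 2 powr t + 3 powr t < 0"
proof -
  have e: "3 - 3 * 2 powr t + 3 powr t = 2 powr t * ((3 * (1/2) powr t + 1 * (3/2) powr t) - 3)"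
    by (simp add: powr_divide field_simps)
  have w1: "3 * (1/2) powr 1 + 1 * (3/2) powr 1 = (3::real)" by simp
  have w2: "3 * (1/2) powr 2 + 1 * (3/2) powr 2 = (3::real)" by (simp add: power2_eq_square)
  note cv = convex2[OF _ _ _ _ _ _ w1 w2]
  show "t < 1 \<Longrightarrow> 3 - 3 * 2 powr t + 3 powr t > 0" unfolding e using cv(1)[of t] by simp
  show "1 < t \<Longrightarrow> t < 2 \<Longrightarrow> 3 - 3 * 2 powr t + 3 powr t < 0" unfolding e using cv(2)[of t]
    by (simp add: mult_pos_neg)
qed

lemma Q_sign: fixes t :: real
  shows "t < 1 \<Longrightarrow> 2 - 2 * 3 powr t + (2 powr t)^2 > 0"
    and "1 < t \<Longrightarrow> t < 2 \<Longrightarrow> 2 - 2 * 3 powr t + (2 powr t)^2 < 0"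
proof -
  have f: "(2 powr t)^2 = 4 powr t" by (simp add: power2_eq_square flip: powr_mult)
  have e: "2 - 2 * 3 powr t + (2 powr t)^2 = 3 powr t * ((2 * (1/3) powr t + 1 * (4/3) powr t) - 2)"
    unfolding f by (simp add: powr_divide field_simps)
  have w1: "2 * (1/3) powr 1 + 1 * (4/3) powr 1 = (2::real)" by simp
  have w2: "2 * (1/3) powr 2 + 1 * (4/3) powr 2 = (2::real)" by (simp add: power2_eq_square)
  note cv = convex2[OF _ _ _ _ _ _ w1 w2]
  show "t < 1 \<Longrightarrow> 2 - 2 * 3 powr t + (2 powr t)^2 > 0" unfolding e using cv(1)[of t] by simp
  show "1 < t \<Longrightarrow> t < 2 \<Longrightarrow> 2 - 2 * 3 powr t + (2 powr t)^2 < 0" unfolding e using cv(2)[of t]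
    by (simp add: mult_pos_neg)
qed

definition GG :: "real \<Rightarrow> real \<Rightarrow> real" where
  "GG a b = (-1 + 2*b + 3*a^2 - 2*a^3 - b^2 + a^2*b) / 4"

lemma det_GG: "detSigma3 H = GG (exp (2*H*ln 2)) (exp (2*H*ln 3))"
proof -
  have a: "exp (2*H*ln 2) = 2 powr (2*H)" by (simp add: powr_def)
  have b: "exp (2*H*ln 3) = 3 powr (2*H)" by (simp add: powr_def)
  have r1: "2 powr (2*H - 1) = 2 powr (2*H) / 2" by (simp add: powr_diff)
  have r2: "2 powr (2*H + 1) = 2 powr (2*H) * 2" by (simp add: powr_add)
  show ?thesis unfolding a b detSigma3_def rho1_def rho2_def GG_def r1 r2
    by (simp add: power2_eq_square power3_eq_cube field_simps)
qed

lemma deriv_det: "(detSigma3 has_real_derivative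
   (2 * ln 2 * (2 powr (2*H))^2 * (3 - 3 * 2 powr (2*H) + 3 powr (2*H))
    + ln 3 * 3 powr (2*H) * (2 - 2 * 3 powr (2*H) + (2 powr (2*H))^2)) / 2) (at H)"
proof -
  have e: "detSigma3 = (\<lambda>H. GG (exp (2*H*ln 2)) (exp (2*H*ln 3)))" using det_GG by auto
  have a: "exp (2*H*ln 2) = 2 powr (2*H)" by (simp add: powr_def)
  have b: "exp (2*H*ln 3) = 3 powr (2*H)" by (simp add: powr_def)
  show ?thesis unfolding e GG_def
    apply (rule derivative_eq_intros refl | simp)+
    unfolding a b by (simp add: power2_eq_square power3_eq_cube field_simps)
qed

lemma det_cont: "continuous_on S detSigma3"
  using deriv_det by (meson DERIV_isCont continuous_at_imp_continuous_on)

lemma vals: "detSigma3 0 = 1/2" "detSigma3 (1/2) = 1" "detSigma3 1 = 0"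
proof -
  have "exp (2*ln 2) = (2::real) powr 2" "exp (2*ln 3) = (3::real) powr 2" by (simp_all add: powr_def)
  then have "exp (2*ln 2) = (4::real)" "exp (2*ln 3) = (9::real)" by simp_all
  then show "detSigma3 0 = 1/2" "detSigma3 (1/2) = 1" "detSigma3 1 = 0"
    by (simp_all add: det_GG GG_def exp_ln)
qed

lemma mono_up: assumes "0 \<le> x" "x < y" "y \<le> 1/2" shows "detSigma3 x < detSigma3 y"
proof (rule DERIV_pos_imp_increasing_open[OF assms(2) _ det_cont])
  fix z assume z: "x < z" "z < y"
  then have "2*z < 1" using assms by simp
  note p = P_sign(1)[OF this] and q = Q_sign(1)[OF this]
  show "\<exists>d. DERIV detSigma3 z :> d \<and> d > 0"
    by (rule exI, rule conjI, rule deriv_det) (use p q in \<open>simp add: add_pos_pos\<close>)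
qed

lemma mono_down: assumes "1/2 \<le> x" "x < y" "y \<le> 1" shows "detSigma3 y < detSigma3 x"
proof (rule DERIV_neg_imp_decreasing_open[OF assms(2) _ det_cont])
  fix z assume z: "x < z" "z < y"
  then have "1 < 2*z" "2*z < 2" using assms by simp_all
  note p = P_sign(2)[OF this] and q = Q_sign(2)[OF this]
  show "\<exists>d. DERIV detSigma3 z :> d \<and> d < 0"
    by (rule exI, rule conjI, rule deriv_det) (use p q in \<open>simp add: add_neg_neg mult_pos_neg\<close>)
qed

lemma det_eq: "det (Sigma3 H) = detSigma3 H"
  unfolding det_3 Sigma3_def detSigma3_def by (simp add: power2_eq_square algebra_simps)

lemma det_pos: assumes "0 \<le> H" "H < 1" shows "detSigma3 H > 0"
proof (cases "H \<le> 1/2")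
  case True
  show ?thesis
  proof (cases "H = 0")
    case True then show ?thesis using vals by simp
  next
    case False then show ?thesis using mono_up[of 0 H] vals assms \<open>H \<le> 1/2\<close> by simp
  qed
next
  case False then show ?thesis using mono_down[of H 1] vals assms by simp
qed

lemma det_ge_half: assumes "0 \<le> H" "H \<le> 1/2" shows "detSigma3 H \<ge> 1/2"
  using mono_up[of 0 H] vals assms by (cases "H = 0") auto

lemma lim1: "((\<lambda>H. logext (detSigma3 H)) \<longlongrightarrow> -\<infinity>) (at_left 1)"
proof -
  have ev: "eventually (\<lambda>H. H \<in> {1/2<..<1}) (at_left (1::real))"
    by (rule eventually_at_left_real) simp
  have t: "(detSigma3 \<longlongrightarrow> 0) (at_left 1)"
  proof -
    have "isCont detSigma3 1" using deriv_det by (rule DERIV_isCont)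
    then have "(detSigma3 \<longlongrightarrow> detSigma3 1) (at 1)" by (simp add: isCont_def)
    then have "(detSigma3 \<longlongrightarrow> detSigma3 1) (at_left 1)"
      by (rule tendsto_mono[OF at_within_le_at])
    then show ?thesis using vals(3) by simp
  qed
  have ev2: "eventually (\<lambda>H. detSigma3 H \<in> {0<..} - {0}) (at_left 1)"
  proof (rule eventually_mono[OF ev])
    fix H :: real assume "H \<in> {1/2<..<1}"
    then have "detSigma3 H > 0" by (intro det_pos) auto
    then show "detSigma3 H \<in> {0<..} - {0}" by simp
  qed
  have "filterlim detSigma3 (at_right 0) (at_left 1)"
    by (rule filterlim_at_withinI[OF t ev2])
  then have "LIM H at_left 1. ln (detSigma3 H) :> at_bot"
    by (rule filterlim_compose[OF ln_at_0])
  then have L: "((ereal \<circ> (\<lambda>H. ln (detSigma3 H))) \<longlongrightarrow> -\<infinity>) (at_left 1)"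
    by (subst ereal_tendsto_simps2(3))
  have E: "eventually (\<lambda>H. (ereal \<circ> (\<lambda>H. ln (detSigma3 H))) H = logext (detSigma3 H)) (at_left 1)"
    using ev
  proof (rule eventually_mono)
    fix H :: real assume "H \<in> {1/2<..<1}"
    then have "detSigma3 H > 0" by (intro det_pos) auto
    then show "(ereal \<circ> (\<lambda>H. ln (detSigma3 H))) H = logext (detSigma3 H)"
      by (simp add: logext_def)
  qed
  show ?thesis by (rule tendsto_cong[THEN iffD1, OF E L])
qed

theorem mainTheorem2:
  shows "(\<forall>H\<in>{0..1}. det (Sigma3 H) = detSigma3 H)
    \<and> detSigma3 0 = 1/2 \<and> detSigma3 (1/2) = 1 \<and> detSigma3 1 = 0
    \<and> (\<forall>x\<in>{0..1/2}. \<forall>y\<in>{0..1/2}. x < y \<longrightarrow> detSigma3 x < detSigma3 y)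
    \<and> (\<forall>x\<in>{1/2..1}. \<forall>y\<in>{1/2..1}. x < y \<longrightarrow> detSigma3 y < detSigma3 x)
    \<and> logext (detSigma3 0) = - ereal (ln 2) \<and> logext (detSigma3 (1/2)) = 0
    \<and> logext (detSigma3 1) = -\<infinity>
    \<and> (\<forall>x\<in>{0..1/2}. \<forall>y\<in>{0..1/2}. x < y \<longrightarrow> logext (detSigma3 x) < logext (detSigma3 y))
    \<and> (\<forall>x\<in>{1/2..1}. \<forall>y\<in>{1/2..1}. x < y \<longrightarrow> logext (detSigma3 y) < logext (detSigma3 x))
    \<and> ((\<lambda>H. logext (detSigma3 H)) \<longlongrightarrow> -\<infinity>) (at_left 1)"
proof (intro conjI ballI impI)
  show "det (Sigma3 H) = detSigma3 H" for H by (rule det_eq)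
  show "detSigma3 0 = 1/2" "detSigma3 (1/2) = 1" "detSigma3 1 = 0" by (rule vals)+
  show "detSigma3 x < detSigma3 y" if "x \<in> {0..1/2}" "y \<in> {0..1/2}" "x < y" for x y
    using mono_up that by auto
  show "detSigma3 y < detSigma3 x" if "x \<in> {1/2..1}" "y \<in> {1/2..1}" "x < y" for x y
    using mono_down that by auto
  show "logext (detSigma3 0) = - ereal (ln 2)" by (simp add: vals logext_def ln_div)
  show "logext (detSigma3 (1/2)) = 0" by (simp add: vals logext_def)
  show "logext (detSigma3 1) = -\<infinity>" by (simp add: vals logext_def)
  show "logext (detSigma3 x) < logext (detSigma3 y)" if "x \<in> {0..1/2}" "y \<in> {0..1/2}" "x < y" for x y
  proof -
    have "detSigma3 x < detSigma3 y" "detSigma3 x \<ge> 1/2" using mono_up det_ge_half that by auto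
    then show ?thesis by (simp add: logext_def)
  qed
  show "logext (detSigma3 y) < logext (detSigma3 x)" if "x \<in> {1/2..1}" "y \<in> {1/2..1}" "x < y" for x y
  proof -
    have lt: "detSigma3 y < detSigma3 x" using mono_down that by auto
    have px: "detSigma3 x > 0" using det_pos that by auto
    show ?thesis
    proof (cases "y = 1")
      case True then show ?thesis using px by (simp add: vals logext_def)
    next
      case False
      then have "detSigma3 y > 0" using det_pos that by auto
      then show ?thesis using lt px by (simp add: logext_def)
    qed
  qed
  show "((\<lambda>H. logext (detSigma3 H)) \<longlongrightarrow> -\<infinity>) (at_left 1)" by (rule lim1)
qed

end
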